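(* Let $R=\mathbb{Z}[t]/(t^3)$ and, for $\operatorname{Re}(s)>1$, let $\zeta_R(s)=\sum_{S}[R:S]^{-s}$, where the sum runs over all subrings $S$ of $R$. (i) For every prime $p$, the $p$-part $\zeta_{R,p}(s)=\sum_{S:\,[R:S]\text{ a power of }p}[R:S]^{-s}$ satisfies, with $Z=p^{-s}$, \[ \zeta_{R,p}(s)=\frac{1+pZ^2}{(1-Z)(1-p^2Z^3)} . \] (ii) For $\operatorname{Re}(s)>1$, \[ \zeta_R(s)=\frac{\zeta(s)\,\zeta(2s-1)\,\zeta(3s-2)}{\zeta(4s-2)}, \] where $\zeta$ denotes the Riemann zeta function.
   Context: A subring $S$ of $R=\mathbb{Z}[t]/(t^3)$ means an additive subgroup of finite index that contains $1$ and is closed under multiplication. $[R:S]$ denotes the index of $S$ as an additive subgroup. *)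

theory Defs
  imports "HOL-Analysis.Analysis" "HOL-Computational_Algebra.Primes"
begin

text \<open>The ring R = Z[t]/(t^3), with the element a + b t + c t^2 represented
  as the triple (a, b, c) of integers (Z-basis 1, t, t^2).\<close>

type_synonym relt = "int \<times> int \<times> int"

definition radd :: "relt \<Rightarrow> relt \<Rightarrow> relt" where
  "radd x y = (case x of (a, b, c) \<Rightarrow> case y of (a', b', c') \<Rightarrow> (a + a', b + b', c + c'))"

definition rneg :: "relt \<Rightarrow> relt" where
  "rneg x = (case x of (a, b, c) \<Rightarrow> (- a, - b, - c))"

definition rzero :: relt where "rzero = (0, 0, 0)"

definition rone :: relt where "rone = (1, 0, 0)"

text \<open>(a + b t + c t^2)(a' + b' t + c' t^2) mod t^3\<close>
definition rmul :: "relt \<Rightarrow> relt \<Rightarrow> relt" where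
  "rmul x y = (case x of (a, b, c) \<Rightarrow> case y of (a', b', c') \<Rightarrow>
      (a * a', a * b' + b * a', a * c' + b * b' + c * a'))"

definition coset_rel :: "relt set \<Rightarrow> (relt \<times> relt) set" where
  "coset_rel S = {(x, y). radd x (rneg y) \<in> S}"

definition rindex :: "relt set \<Rightarrow> nat" where
  "rindex S = card (UNIV // coset_rel S)"

definition additive_subgroup :: "relt set \<Rightarrow> bool" where
  "additive_subgroup S \<longleftrightarrow> rzero \<in> S \<and> (\<forall>x\<in>S. \<forall>y\<in>S. radd x y \<in> S) \<and> (\<forall>x\<in>S. rneg x \<in> S)"

definition is_subring :: "relt set \<Rightarrow> bool" where
  "is_subring S \<longleftrightarrow> additive_subgroup S \<and> finite (UNIV // coset_rel S)
     \<and> rone \<in> S \<and> (\<forall>x\<in>S. \<forall>y\<in>S. rmul x y \<in> S)"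

text \<open>Riemann zeta function, via its Dirichlet series (valid for Re s > 1, which is
  the only range in which it is used).\<close>
definition rzeta :: "complex \<Rightarrow> complex" where
  "rzeta s = (\<Sum>n. of_nat (Suc n) powr (- s))"

end

theory Submission
  imports Defs "HOL-Computational_Algebra.Squarefree" "HOL-Analysis.Gamma_Function"
begin


definition ring_of :: "int \<Rightarrow> int \<Rightarrow> int \<Rightarrow> relt set" where
  "ring_of \<alpha> \<beta> \<gamma> = {(a,b,c). \<alpha> dvd b \<and> \<gamma> dvd (c - (b div \<alpha>) * \<beta>)}"

lemma mem_ring_of:
  assumes "\<alpha> \<noteq> 0"
  shows "(a,b,c) \<in> ring_of \<alpha> \<beta> \<gamma> \<longleftrightarrow> (\<exists>m n. b = m * \<alpha> \<and> c = m * \<beta> + n * \<gamma>)"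
proof
  assume "(a,b,c) \<in> ring_of \<alpha> \<beta> \<gamma>"
  then obtain m where m: "b = \<alpha> * m" unfolding ring_of_def by (auto elim!: dvdE)
  with assms have "b div \<alpha> = m" by simp
  with \<open>(a,b,c) \<in> ring_of \<alpha> \<beta> \<gamma>\<close> obtain n where "c - m * \<beta> = \<gamma> * n" unfolding ring_of_def by (auto elim!: dvdE)
  with m show "\<exists>m n. b = m * \<alpha> \<and> c = m * \<beta> + n * \<gamma>"
    by (intro exI[of _ m] exI[of _ n]) (auto simp: algebra_simps)
next
  assume "\<exists>m n. b = m * \<alpha> \<and> c = m * \<beta> + n * \<gamma>"
  then obtain m n where "b = m * \<alpha>" "c = m * \<beta> + n * \<gamma>" by blast
  with assms show "(a,b,c) \<in> ring_of \<alpha> \<beta> \<gamma>" unfolding ring_of_def by auto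
qed

lemma quot_card_eq:
  "card (UNIV // {(x,y). f x = f y}) = card (range f)"
proof -
  have "UNIV // {(x,y). f x = f y} = (\<lambda>k. f -` {k}) ` range f"
  proof -
    have "{(x,y). f x = f y} `` {x} = f -` {f x}" for x by auto
    hence "UNIV // {(x,y). f x = f y} = (\<lambda>x. f -` {f x}) ` UNIV"
      unfolding quotient_def by auto
    thus ?thesis by (simp add: image_image)
  qed
  moreover have "inj_on (\<lambda>k. f -` {k}) (range f)"
    by (auto simp: inj_on_def)
  ultimately show ?thesis by (simp add: card_image)
qed

lemma quot_finite_eq:
  "finite (UNIV // {(x,y). f x = f y}) \<longleftrightarrow> finite (range f)"
proof -
  have "UNIV // {(x,y). f x = f y} = (\<lambda>k. f -` {k}) ` range f"
  proof -
    have "{(x,y). f x = f y} `` {x} = f -` {f x}" for x by auto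
    hence "UNIV // {(x,y). f x = f y} = (\<lambda>x. f -` {f x}) ` UNIV"
      unfolding quotient_def by auto
    thus ?thesis by (simp add: image_image)
  qed
  moreover have "inj_on (\<lambda>k. f -` {k}) (range f)"
    by (auto simp: inj_on_def)
  ultimately show ?thesis by (simp add: finite_image_iff)
qed

definition nf :: "int \<Rightarrow> int \<Rightarrow> int \<Rightarrow> relt \<Rightarrow> int \<times> int" where
  "nf \<alpha> \<beta> \<gamma> x = (case x of (a,b,c) \<Rightarrow> (b mod \<alpha>, (c - (b div \<alpha>) * \<beta>) mod \<gamma>))"

lemma coset_rel_ring_of:
  assumes "\<alpha> > 0"
  shows "coset_rel (ring_of \<alpha> \<beta> \<gamma>) = {(x,y). nf \<alpha> \<beta> \<gamma> x = nf \<alpha> \<beta> \<gamma> y}"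
proof -
  have "(radd (a,b,c) (rneg (a',b',c')) \<in> ring_of \<alpha> \<beta> \<gamma>) \<longleftrightarrow>
        nf \<alpha> \<beta> \<gamma> (a,b,c) = nf \<alpha> \<beta> \<gamma> (a',b',c')" for a b c a' b' c'
  proof -
    have "radd (a,b,c) (rneg (a',b',c')) = (a - a', b - b', c - c')"
      by (simp add: radd_def rneg_def)
    moreover have "(a - a', b - b', c - c') \<in> ring_of \<alpha> \<beta> \<gamma> \<longleftrightarrow>
         (b mod \<alpha> = b' mod \<alpha> \<and> (c - (b div \<alpha>) * \<beta>) mod \<gamma> = (c' - (b' div \<alpha>) * \<beta>) mod \<gamma>)"
    proof (cases "b mod \<alpha> = b' mod \<alpha>")
      case True
      have b: "b = \<alpha> * (b div \<alpha>) + b mod \<alpha>" "b' = \<alpha> * (b' div \<alpha>) + b' mod \<alpha>" by simp_all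
      have "(b - b') = \<alpha> * (b div \<alpha> - b' div \<alpha>)" using True b by (metis (no_types, lifting) add_diff_cancel_right right_diff_distrib)
      hence d: "(b - b') div \<alpha> = b div \<alpha> - b' div \<alpha>" using assms by simp
      have e: "(c - c' - ((b - b') div \<alpha>) * \<beta>) = (c - (b div \<alpha>) * \<beta>) - (c' - (b' div \<alpha>) * \<beta>)"
        by (simp add: d algebra_simps)
      have ab: "\<alpha> dvd b - b'" using True by (simp add: mod_eq_dvd_iff)
      have "(a - a', b - b', c - c') \<in> ring_of \<alpha> \<beta> \<gamma> \<longleftrightarrow> \<gamma> dvd (c - c' - ((b - b') div \<alpha>) * \<beta>)"
        using ab by (simp add: ring_of_def)
      also have "\<dots> \<longleftrightarrow> \<gamma> dvd ((c - (b div \<alpha>) * \<beta>) - (c' - (b' div \<alpha>) * \<beta>))" by (simp only: e)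
      also have "\<dots> \<longleftrightarrow> (c - (b div \<alpha>) * \<beta>) mod \<gamma> = (c' - (b' div \<alpha>) * \<beta>) mod \<gamma>"
        by (simp only: mod_eq_dvd_iff)
      finally show ?thesis using True by simp
    next
      case False
      then show ?thesis unfolding ring_of_def by (auto simp: mod_eq_dvd_iff)
    qed
    ultimately show ?thesis by (simp add: nf_def)
  qed
  then show ?thesis unfolding coset_rel_def by auto
qed

lemma range_nf:
  assumes "\<alpha> > 0" "\<gamma> > 0"
  shows "range (nf \<alpha> \<beta> \<gamma>) = {0..<\<alpha>} \<times> {0..<\<gamma>}"
proof
  show "range (nf \<alpha> \<beta> \<gamma>) \<subseteq> {0..<\<alpha>} \<times> {0..<\<gamma>}"
    using assms by (auto simp: nf_def split: prod.splits)
  show "{0..<\<alpha>} \<times> {0..<\<gamma>} \<subseteq> range (nf \<alpha> \<beta> \<gamma>)"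
  proof clarify
    fix i j assume ij: "i \<in> {0..<\<alpha>}" "j \<in> {0..<\<gamma>}"
    then have "nf \<alpha> \<beta> \<gamma> (0,i,j) = (i,j)" by (simp add: nf_def div_pos_pos_trivial mod_pos_pos_trivial)
    then show "(i,j) \<in> range (nf \<alpha> \<beta> \<gamma>)" by (metis rangeI)
  qed
qed

lemma rindex_ring_of:
  assumes "\<alpha> > 0" "\<gamma> > 0"
  shows "rindex (ring_of \<alpha> \<beta> \<gamma>) = nat \<alpha> * nat \<gamma>"
    and "finite (UNIV // coset_rel (ring_of \<alpha> \<beta> \<gamma>))"
proof -
  show "rindex (ring_of \<alpha> \<beta> \<gamma>) = nat \<alpha> * nat \<gamma>"
    unfolding rindex_def coset_rel_ring_of[OF assms(1)] quot_card_eq range_nf[OF assms]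
    by (simp add: card_cartesian_product)
  show "finite (UNIV // coset_rel (ring_of \<alpha> \<beta> \<gamma>))"
    unfolding coset_rel_ring_of[OF assms(1)] quot_finite_eq range_nf[OF assms] by simp
qed

lemma subring_ring_of:
  assumes "\<alpha> > 0" "\<gamma> > 0"
  shows "is_subring (ring_of \<alpha> \<beta> \<gamma>) \<longleftrightarrow> \<gamma> dvd \<alpha>^2"
proof
  have a0: "\<alpha> \<noteq> 0" using assms by simp
  assume "is_subring (ring_of \<alpha> \<beta> \<gamma>)"
  moreover have "(0,\<alpha>,\<beta>) \<in> ring_of \<alpha> \<beta> \<gamma>"
    unfolding mem_ring_of[OF a0] by (intro exI[of _ 1] exI[of _ 0]) simp
  ultimately have "rmul (0,\<alpha>,\<beta>) (0,\<alpha>,\<beta>) \<in> ring_of \<alpha> \<beta> \<gamma>"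
    unfolding is_subring_def by blast
  hence "(0,0,\<alpha>^2) \<in> ring_of \<alpha> \<beta> \<gamma>" by (simp add: rmul_def power2_eq_square)
  then obtain m n where "0 = m * \<alpha>" "\<alpha>^2 = m * \<beta> + n * \<gamma>"
    unfolding mem_ring_of[OF a0] by blast
  then show "\<gamma> dvd \<alpha>^2" using a0 by simp
next
  have a0: "\<alpha> \<noteq> 0" using assms by simp
  assume "\<gamma> dvd \<alpha>^2"
  then obtain k where k: "\<alpha>^2 = \<gamma> * k" by (auto elim: dvdE)
  have add: "radd x y \<in> ring_of \<alpha> \<beta> \<gamma>" if "x \<in> ring_of \<alpha> \<beta> \<gamma>" "y \<in> ring_of \<alpha> \<beta> \<gamma>" for x y
  proof -
    obtain a b c a' b' c' where xy: "x = (a,b,c)" "y = (a',b',c')" by (cases x, cases y) auto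
    from that obtain m n m' n' where "b = m * \<alpha>" "c = m * \<beta> + n * \<gamma>" "b' = m' * \<alpha>" "c' = m' * \<beta> + n' * \<gamma>"
      unfolding xy mem_ring_of[OF a0] by blast
    then show ?thesis unfolding xy radd_def prod.case mem_ring_of[OF a0]
      by (intro exI[of _ "m+m'"] exI[of _ "n+n'"]) (simp add: algebra_simps)
  qed
  have neg: "rneg x \<in> ring_of \<alpha> \<beta> \<gamma>" if "x \<in> ring_of \<alpha> \<beta> \<gamma>" for x
  proof -
    obtain a b c where xy: "x = (a,b,c)" by (cases x) auto
    from that obtain m n where "b = m * \<alpha>" "c = m * \<beta> + n * \<gamma>"
      unfolding xy mem_ring_of[OF a0] by blast
    then show ?thesis unfolding xy rneg_def prod.case mem_ring_of[OF a0]
      by (intro exI[of _ "-m"] exI[of _ "-n"]) (simp add: algebra_simps)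
  qed
  have mul: "rmul x y \<in> ring_of \<alpha> \<beta> \<gamma>" if "x \<in> ring_of \<alpha> \<beta> \<gamma>" "y \<in> ring_of \<alpha> \<beta> \<gamma>" for x y
  proof -
    obtain a b c a' b' c' where xy: "x = (a,b,c)" "y = (a',b',c')" by (cases x, cases y) auto
    from that obtain m n m' n' where e: "b = m * \<alpha>" "c = m * \<beta> + n * \<gamma>" "b' = m' * \<alpha>" "c' = m' * \<beta> + n' * \<gamma>"
      unfolding xy mem_ring_of[OF a0] by blast
    have "a * c' + b * b' + c * a' = (a*m' + m*a') * \<beta> + (a*n' + m*m'*k + n*a') * \<gamma>"
      using k unfolding e by (simp add: algebra_simps power2_eq_square)
    then show ?thesis unfolding xy rmul_def prod.case mem_ring_of[OF a0] using e
      by (intro exI[of _ "a*m' + m*a'"] exI[of _ "a*n' + m*m'*k + n*a'"]) (simp add: algebra_simps)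
  qed
  have "rzero \<in> ring_of \<alpha> \<beta> \<gamma>" unfolding rzero_def mem_ring_of[OF a0] by auto
  moreover have "rone \<in> ring_of \<alpha> \<beta> \<gamma>" unfolding rone_def mem_ring_of[OF a0] by auto
  ultimately show "is_subring (ring_of \<alpha> \<beta> \<gamma>)"
    unfolding is_subring_def additive_subgroup_def using add neg mul rindex_ring_of(2)[OF assms]
    by blast
qed

lemma ring_of_inj:
  assumes "\<alpha> > 0" "\<gamma> > 0" "0 \<le> \<beta>" "\<beta> < \<gamma>"
  assumes "\<alpha>' > 0" "\<gamma>' > 0" "0 \<le> \<beta>'" "\<beta>' < \<gamma>'"
  assumes eq: "ring_of \<alpha> \<beta> \<gamma> = ring_of \<alpha>' \<beta>' \<gamma>'"
  shows "\<alpha> = \<alpha>' \<and> \<beta> = \<beta>' \<and> \<gamma> = \<gamma>'"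
proof -
  have a0: "\<alpha> \<noteq> 0" "\<alpha>' \<noteq> 0" using assms by auto
  have m1: "(0,\<alpha>,\<beta>) \<in> ring_of \<alpha> \<beta> \<gamma>" "(0,0,\<gamma>) \<in> ring_of \<alpha> \<beta> \<gamma>"
    unfolding mem_ring_of[OF a0(1)] by (rule exI[of _ 1], rule exI[of _ 0], simp, rule exI[of _ 0], rule exI[of _ 1], simp)
  have m2: "(0,\<alpha>',\<beta>') \<in> ring_of \<alpha>' \<beta>' \<gamma>'" "(0,0,\<gamma>') \<in> ring_of \<alpha>' \<beta>' \<gamma>'"
    unfolding mem_ring_of[OF a0(2)] by (rule exI[of _ 1], rule exI[of _ 0], simp, rule exI[of _ 0], rule exI[of _ 1], simp)
  from m1(1) obtain m n where "\<alpha> = m * \<alpha>'" unfolding eq mem_ring_of[OF a0(2)] by blast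
  moreover from m2(1) obtain m' n' where "\<alpha>' = m' * \<alpha>" unfolding eq[symmetric] mem_ring_of[OF a0(1)] by blast
  ultimately have aa: "\<alpha> = \<alpha>'" using assms by (intro zdvd_antisym_nonneg) (auto simp: dvd_def mult.commute)
  from m1(2) obtain m n where "0 = m * \<alpha>'" "\<gamma> = m * \<beta>' + n * \<gamma>'" unfolding eq mem_ring_of[OF a0(2)] by blast
  hence g1: "\<gamma>' dvd \<gamma>" using a0 by simp
  from m2(2) obtain m n where "0 = m * \<alpha>" "\<gamma>' = m * \<beta> + n * \<gamma>" unfolding eq[symmetric] mem_ring_of[OF a0(1)] by blast
  hence g2: "\<gamma> dvd \<gamma>'" using a0 by simp
  have gg: "\<gamma> = \<gamma>'" using g1 g2 assms by (intro zdvd_antisym_nonneg) auto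
  have "(0,\<alpha>,\<beta>) \<in> ring_of \<alpha>' \<beta>' \<gamma>'" using m1(1) eq by simp
  then obtain m n where "\<alpha> = m * \<alpha>'" "\<beta> = m * \<beta>' + n * \<gamma>'" unfolding mem_ring_of[OF a0(2)] by blast
  hence "\<beta> = \<beta>' + n * \<gamma>" using a0 aa gg by simp
  hence "\<beta> mod \<gamma> = \<beta>' mod \<gamma>" by simp
  hence "\<beta> = \<beta>'" using assms gg by (simp add: mod_pos_pos_trivial)
  with aa gg show ?thesis by simp
qed

lemma asg_add:
  assumes "additive_subgroup S" "(a,b,c) \<in> S" "(a',b',c') \<in> S"
  shows "(a+a', b+b', c+c') \<in> S"
  using assms unfolding additive_subgroup_def radd_def by force

lemma asg_neg:
  assumes "additive_subgroup S" "(a,b,c) \<in> S"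
  shows "(-a, -b, -c) \<in> S"
  using assms unfolding additive_subgroup_def rneg_def by force

lemma asg_smul_nat:
  assumes "additive_subgroup S" "(a,b,c) \<in> S"
  shows "(int n * a, int n * b, int n * c) \<in> S"
proof (induction n)
  case 0
  then show ?case using assms unfolding additive_subgroup_def rzero_def by simp
next
  case (Suc n)
  from asg_add[OF assms Suc] show ?case by (simp add: algebra_simps)
qed

lemma asg_smul:
  assumes "additive_subgroup S" "(a,b,c) \<in> S"
  shows "(k * a, k * b, k * c) \<in> S"
proof (cases "k \<ge> 0")
  case True
  then show ?thesis using asg_smul_nat[OF assms, of "nat k"] by simp
next
  case False
  then show ?thesis using asg_neg[OF assms(1) asg_smul_nat[OF assms, of "nat (-k)"]] by simp
qed

lemma asg_comb:
  assumes "additive_subgroup S" "(a,b,c) \<in> S" "(a',b',c') \<in> S"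
  shows "(k*a + l*a', k*b + l*b', k*c + l*c') \<in> S"
  using asg_add[OF assms(1) asg_smul[OF assms(1,2)] asg_smul[OF assms(1,3)]] .

lemma fin_mult:
  assumes "is_subring S"
  shows "\<exists>k>0. (k*a, k*b, k*c) \<in> S"
proof -
  have as: "additive_subgroup S" and fin: "finite (UNIV // coset_rel S)"
    using assms unfolding is_subring_def by auto
  define y where "y n = (int n * a, int n * b, int n * c)" for n :: nat
  define g where "g n = coset_rel S `` {y n}" for n
  have "range g \<subseteq> UNIV // coset_rel S" unfolding g_def quotient_def by auto
  hence "finite (range g)" using fin finite_subset by blast
  hence "\<not> inj g" using finite_imageD infinite_UNIV_nat by blast
  then obtain i j where ij: "i \<noteq> j" "g i = g j" unfolding inj_def by blast
  have refl: "(x, x) \<in> coset_rel S" for x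
    using as unfolding coset_rel_def additive_subgroup_def
    by (cases x) (auto simp: radd_def rneg_def rzero_def)
  have "y j \<in> g j" unfolding g_def using refl by auto
  hence "(y i, y j) \<in> coset_rel S" using ij unfolding g_def by auto
  hence "radd (y i) (rneg (y j)) \<in> S" unfolding coset_rel_def by auto
  hence m: "((int i - int j) * a, (int i - int j) * b, (int i - int j) * c) \<in> S"
    unfolding y_def radd_def rneg_def by (simp add: algebra_simps)
  show ?thesis
  proof (cases "i > j")
    case True
    then show ?thesis using m by (intro exI[of _ "int i - int j"]) auto
  next
    case False
    then show ?thesis using asg_neg[OF as m] ij(1)
      by (intro exI[of _ "int j - int i"]) (auto simp: algebra_simps)
  qed
qed

lemma classify:
  assumes sr: "is_subring S"
  shows "\<exists>\<alpha> \<beta> \<gamma>. \<alpha> > 0 \<and> \<gamma> > 0 \<and> 0 \<le> \<beta> \<and> \<beta> < \<gamma> \<and> S = ring_of \<alpha> \<beta> \<gamma>"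
proof -
  have as: "additive_subgroup S" and one: "(1,0,0) \<in> S" using sr unfolding is_subring_def rone_def by auto
  define G where "G = {n::nat. n > 0 \<and> (0,0,int n) \<in> S}"
  define A where "A = {n::nat. n > 0 \<and> (\<exists>c. (0,int n,c) \<in> S)}"
  obtain k where k: "k > 0" "(k*0,k*0,k*1) \<in> S" using fin_mult[OF sr] by blast
  hence "nat k \<in> G" unfolding G_def by simp
  hence gG: "Least (\<lambda>n. n \<in> G) \<in> G" by (rule LeastI)
  have gmin: "Least (\<lambda>n. n \<in> G) \<le> n" if "n \<in> G" for n using that by (rule Least_le)
  obtain k' where k': "k' > 0" "(k'*0,k'*1,k'*0) \<in> S" using fin_mult[OF sr] by blast
  hence "nat k' \<in> A" unfolding A_def by auto
  hence aA: "Least (\<lambda>n. n \<in> A) \<in> A" by (rule LeastI)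
  have amin: "Least (\<lambda>n. n \<in> A) \<le> n" if "n \<in> A" for n using that by (rule Least_le)
  define \<gamma> where "\<gamma> = int (Least (\<lambda>n. n \<in> G))"
  define \<alpha> where "\<alpha> = int (Least (\<lambda>n. n \<in> A))"
  have g0: "\<gamma> > 0" and gS: "(0,0,\<gamma>) \<in> S" using gG unfolding G_def \<gamma>_def by auto
  obtain \<beta>0 where a0: "\<alpha> > 0" and aS0: "(0,\<alpha>,\<beta>0) \<in> S" using aA unfolding A_def \<alpha>_def by auto
  define \<beta> where "\<beta> = \<beta>0 mod \<gamma>"
  have "(1*0 + (-(\<beta>0 div \<gamma>))*0, 1*\<alpha> + (-(\<beta>0 div \<gamma>))*0, 1*\<beta>0 + (-(\<beta>0 div \<gamma>))*\<gamma>) \<in> S"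
    by (rule asg_comb[OF as aS0 gS])
  hence "(0,\<alpha>,\<beta>0 - \<gamma> * (\<beta>0 div \<gamma>)) \<in> S" by (simp add: algebra_simps)
  moreover have "\<beta>0 - \<gamma> * (\<beta>0 div \<gamma>) = \<beta>" unfolding \<beta>_def by (rule minus_mult_div_eq_mod)
  ultimately have aS: "(0,\<alpha>,\<beta>) \<in> S" by simp
  have gmin': "\<not> (0 < r \<and> r < \<gamma>)" if "(0,0,r) \<in> S" for r
  proof
    assume r: "0 < r \<and> r < \<gamma>"
    hence "nat r \<in> G" using that unfolding G_def by auto
    from gmin[OF this] r show False unfolding \<gamma>_def by linarith
  qed
  have amin': "\<not> (0 < r \<and> r < \<alpha>)" if "(0,r,c) \<in> S" for r c
  proof
    assume r: "0 < r \<and> r < \<alpha>"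
    hence "nat r \<in> A" using that unfolding A_def by auto
    from amin[OF this] r show False unfolding \<alpha>_def by linarith
  qed
  have "S = ring_of \<alpha> \<beta> \<gamma>"
  proof (intro set_eqI iffI)
    fix x assume xS: "x \<in> S"
    obtain a b c where x: "x = (a,b,c)" by (cases x) auto
    have "(1*a + (-a)*1, 1*b + (-a)*0, 1*c + (-a)*0) \<in> S"
      by (rule asg_comb[OF as xS[unfolded x] one])
    hence bc: "(0,b,c) \<in> S" by simp
    have "(1*0 + (-(b div \<alpha>))*0, 1*b + (-(b div \<alpha>))*\<alpha>, 1*c + (-(b div \<alpha>))*\<beta>) \<in> S"
      by (rule asg_comb[OF as bc aS])
    hence "(0, b mod \<alpha>, c - (b div \<alpha>) * \<beta>) \<in> S"
      by (simp add: minus_div_mult_eq_mod minus_mult_div_eq_mod algebra_simps)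
    from amin'[OF this] a0 have bm: "b mod \<alpha> = 0"
      using pos_mod_sign[of \<alpha> b] pos_mod_bound[of \<alpha> b] by linarith
    have c1: "(0, 0, c - (b div \<alpha>) * \<beta>) \<in> S"
      using \<open>(0, b mod \<alpha>, c - (b div \<alpha>) * \<beta>) \<in> S\<close> bm by simp
    define c' where "c' = c - (b div \<alpha>) * \<beta>"
    have "(1*0 + (-(c' div \<gamma>))*0, 1*0 + (-(c' div \<gamma>))*0, 1*c' + (-(c' div \<gamma>))*\<gamma>) \<in> S"
      by (rule asg_comb[OF as c1[folded c'_def] gS])
    hence "(0, 0, c' mod \<gamma>) \<in> S" by (simp add: minus_div_mult_eq_mod minus_mult_div_eq_mod algebra_simps)
    from gmin'[OF this] g0 have "c' mod \<gamma> = 0"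
      using pos_mod_sign[of \<gamma> c'] pos_mod_bound[of \<gamma> c'] by linarith
    with bm show "x \<in> ring_of \<alpha> \<beta> \<gamma>" unfolding x ring_of_def c'_def by auto
  next
    fix x assume "x \<in> ring_of \<alpha> \<beta> \<gamma>"
    moreover obtain a b c where x: "x = (a,b,c)" by (cases x) auto
    ultimately obtain m n where mn: "b = m * \<alpha>" "c = m * \<beta> + n * \<gamma>"
      using mem_ring_of[of \<alpha> a b c \<beta> \<gamma>] a0 by auto
    have "(m*0 + n*0, m*\<alpha> + n*0, m*\<beta> + n*\<gamma>) \<in> S"
      by (rule asg_comb[OF as aS gS])
    hence "(0, b, c) \<in> S" using mn by simp
    from asg_comb[OF as this one, of 1 a] show "x \<in> S" unfolding x by simp
  qed
  moreover have "0 \<le> \<beta>" "\<beta> < \<gamma>" unfolding \<beta>_def using g0 by auto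
  ultimately show ?thesis using a0 g0 by blast
qed




lemma sqf_pos: "squarefree (w::nat) \<Longrightarrow> w > 0"
  using not_squarefree_0 by (metis gr0I)

lemma sqf_mult_le1:
  assumes "squarefree (w::nat)" "prime p"
  shows "multiplicity p w \<le> 1"
proof -
  have "w \<noteq> 0" using sqf_pos[OF assms(1)] by simp
  thus ?thesis using assms squarefree_factorial_semiring''[of w] by auto
qed

lemma sqf_decomp_unique:
  fixes w v w' v' :: nat
  assumes "squarefree w" "squarefree w'" "v > 0" "v' > 0" "w * v^2 = w' * v'^2"
  shows "w = w' \<and> v = v'"
proof -
  have nz: "w \<noteq> 0" "w' \<noteq> 0" using assms sqf_pos by auto
  have "multiplicity p w = multiplicity p w' \<and> multiplicity p v = multiplicity p v'" if p: "prime p" for p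
  proof -
    have "multiplicity p (w * v^2) = multiplicity p w + 2 * multiplicity p v"
      using p nz assms(3) by (simp add: prime_elem_multiplicity_mult_distrib prime_elem_multiplicity_power_distrib)
    moreover have "multiplicity p (w' * v'^2) = multiplicity p w' + 2 * multiplicity p v'"
      using p nz assms(4) by (simp add: prime_elem_multiplicity_mult_distrib prime_elem_multiplicity_power_distrib)
    moreover have "multiplicity p w \<le> 1" "multiplicity p w' \<le> 1"
      using sqf_mult_le1 assms p by auto
    moreover have "multiplicity p (w * v^2) = multiplicity p (w' * v'^2)" using assms(5) by simp
    ultimately show ?thesis by presburger
  qed
  hence m: "\<And>p. prime p \<Longrightarrow> multiplicity p w = multiplicity p w'" "\<And>p. prime p \<Longrightarrow> multiplicity p v = multiplicity p v'"
    by auto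
  have "normalize w = normalize w'" by (rule multiplicity_eq_imp_eq) (use nz m in auto)
  moreover have "normalize v = normalize v'" by (rule multiplicity_eq_imp_eq) (use assms m in auto)
  ultimately show ?thesis by simp
qed

lemma sqf_decomp_exists:
  assumes "(n::nat) > 0"
  shows "\<exists>w v. squarefree w \<and> v > 0 \<and> n = w * v^2"
proof -
  have "n = squarefree_part n * square_part n ^ 2" by (rule squarefree_decompose)
  moreover have "square_part n \<noteq> 0" using assms by (subst square_part_0_iff) simp
  moreover have "squarefree (squarefree_part n)" by simp
  ultimately show ?thesis by blast
qed

lemma sqf_dvd:
  fixes w v a :: nat
  assumes "squarefree w" "v > 0" "a > 0" "w * v^2 dvd a^2"
  shows "w * v dvd a"
proof (rule multiplicity_le_imp_dvd)
  have w0: "w \<noteq> 0" using assms sqf_pos by auto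
  show "w * v \<noteq> 0" using w0 assms by auto
  fix p :: nat assume p: "prime p"
  have "multiplicity p (w * v^2) \<le> multiplicity p (a^2)"
    using assms by (intro dvd_imp_multiplicity_le) auto
  hence "multiplicity p w + 2 * multiplicity p v \<le> 2 * multiplicity p a"
    using p w0 assms by (simp add: prime_elem_multiplicity_mult_distrib prime_elem_multiplicity_power_distrib)
  moreover have "multiplicity p w \<le> 1" using sqf_mult_le1 assms p by auto
  ultimately have "multiplicity p w + multiplicity p v \<le> multiplicity p a" by presburger
  thus "multiplicity p (w * v) \<le> multiplicity p a"
    using p w0 assms by (simp add: prime_elem_multiplicity_mult_distrib)
qed

definition A0 :: "(nat \<times> nat \<times> nat) set" where
  "A0 = {(u,v,w). u > 0 \<and> v > 0 \<and> squarefree w}"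

definition Bf :: "nat \<times> nat \<times> nat \<Rightarrow> nat set" where
  "Bf = (\<lambda>(u,v,w). lessThan (w * v^2))"

definition Phi :: "(nat \<times> nat \<times> nat) \<times> nat \<Rightarrow> relt set" where
  "Phi = (\<lambda>((u,v,w),\<beta>). ring_of (int (u * v * w)) (int \<beta>) (int (w * v^2)))"

definition idx :: "(nat \<times> nat \<times> nat) \<times> nat \<Rightarrow> nat" where
  "idx = (\<lambda>((u,v,w),\<beta>). u * w^2 * v^3)"

lemma Phi_props:
  assumes "x \<in> Sigma A0 Bf"
  shows "is_subring (Phi x)" "rindex (Phi x) = idx x"
proof -
  obtain u v w \<beta> where x: "x = ((u,v,w),\<beta>)" by (metis prod.exhaust)
  have u: "u > 0" "v > 0" "squarefree w" "\<beta> < w * v^2" using assms unfolding x A0_def Bf_def by auto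
  hence w: "w > 0" using sqf_pos by auto
  have pos: "int (u * v * w) > 0" "int (w * v^2) > 0" using u w by auto
  have "w * v^2 dvd (u * v * w)^2"
    by (rule dvdI[of _ _ "u^2 * w"]) (simp add: power2_eq_square algebra_simps)
  hence "int (w * v^2) dvd int ((u * v * w)^2)" by (simp only: of_nat_dvd_iff)
  hence "int (w * v^2) dvd (int (u * v * w))^2" by (simp only: of_nat_power)
  thus "is_subring (Phi x)" unfolding x Phi_def using subring_ring_of[OF pos] by simp
  have "rindex (Phi x) = nat (int (u * v * w)) * nat (int (w * v^2))"
    unfolding x Phi_def prod.case by (rule rindex_ring_of(1)[OF pos])
  also have "\<dots> = idx x" unfolding nat_int x idx_def prod.case
    by (simp add: power2_eq_square power3_eq_cube algebra_simps)
  finally show "rindex (Phi x) = idx x" .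
qed

lemma Phi_inj: "inj_on Phi (Sigma A0 Bf)"
proof (rule inj_onI)
  fix x y assume xy: "x \<in> Sigma A0 Bf" "y \<in> Sigma A0 Bf" "Phi x = Phi y"
  obtain u v w \<beta> where x: "x = ((u,v,w),\<beta>)" by (metis prod.exhaust)
  obtain u' v' w' \<beta>' where y: "y = ((u',v',w'),\<beta>')" by (metis prod.exhaust)
  have u: "u > 0" "v > 0" "squarefree w" "\<beta> < w * v^2" using xy unfolding x A0_def Bf_def by auto
  have u': "u' > 0" "v' > 0" "squarefree w'" "\<beta>' < w'* v'^2" using xy unfolding y A0_def Bf_def by auto
  have w: "w > 0" "w' > 0" using u u' sqf_pos by auto
  have "int (u * v * w) = int (u'* v'*w') \<and> int \<beta> = int \<beta>' \<and> int (w * v^2) = int (w'* v'^2)"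
    using xy(3) unfolding x y Phi_def
    by (intro ring_of_inj) (use u u' w of_nat_less_iff[of \<beta> "w * v^2"] of_nat_less_iff[of \<beta>' "w' * v'^2"] in auto)
  hence e: "u * v * w = u'* v'*w'" "\<beta> = \<beta>'" "w * v^2 = w'* v'^2" by (simp_all only: of_nat_eq_iff)
  from sqf_decomp_unique[OF u(3) u'(3) u(2) u'(2) e(3)] have "w = w'" "v = v'" by auto
  with e(1) u w have "u = u'" by simp
  with \<open>w = w'\<close> \<open>v = v'\<close> e(2) show "x = y" unfolding x y by simp
qed

lemma Phi_image: "Phi ` Sigma A0 Bf = {S. is_subring S}"
proof
  show "Phi ` Sigma A0 Bf \<subseteq> {S. is_subring S}" using Phi_props by auto
  show "{S. is_subring S} \<subseteq> Phi ` Sigma A0 Bf"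
  proof
    fix S assume "S \<in> {S. is_subring S}"
    hence sr: "is_subring S" by simp
    then obtain \<alpha> \<beta> \<gamma> where abg: "\<alpha> > 0" "\<gamma> > 0" "0 \<le> \<beta>" "\<beta> < \<gamma>" "S = ring_of \<alpha> \<beta> \<gamma>"
      using classify by blast
    have "\<gamma> dvd \<alpha>^2" using subring_ring_of[OF abg(1,2)] sr abg(5) by simp
    define a b g where "a = nat \<alpha>" "b = nat \<beta>" "g = nat \<gamma>"
    have abg': "\<alpha> = int a" "\<beta> = int b" "\<gamma> = int g" "a > 0" "g > 0" "b < g"
      using abg unfolding a_b_g_def by auto
    have gd: "g dvd a^2" using \<open>\<gamma> dvd \<alpha>^2\<close> unfolding abg'(1,3) by (simp flip: of_nat_power)
    obtain w v where wv: "squarefree w" "v > 0" "g = w * v^2" using sqf_decomp_exists[OF abg'(5)] by blast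
    have "w * v dvd a" using sqf_dvd[OF wv(1,2) abg'(4)] gd wv(3) by simp
    then obtain u where u: "a = w * v * u" by (auto elim: dvdE)
    have "u > 0" using u abg'(4) by (auto intro!: Nat.gr0I)
    hence "((u,v,w),b) \<in> Sigma A0 Bf" using wv abg' unfolding A0_def Bf_def by auto
    moreover have "Phi ((u,v,w),b) = S" unfolding Phi_def using abg(5) abg' u wv(3)
      by (simp add: algebra_simps)
    ultimately show "S \<in> Phi ` Sigma A0 Bf" by (metis imageI)
  qed
qed




lemma cpowr_mult_nat: "(of_nat (m * n) :: complex) powr z = of_nat m powr z * of_nat n powr z"
  by (simp add: powr_times_real)

lemma cpowr_pow_nat: "(of_nat (n ^ k) :: complex) powr z = (of_nat n powr z) ^ k"
proof (induction k)
  case 0 show ?case by simp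
next
  case (Suc k)
  have "(of_nat (n ^ Suc k) :: complex) powr z = of_nat (n * n ^ k) powr z" by simp
  also have "\<dots> = of_nat n powr z * of_nat (n ^ k) powr z" by (rule cpowr_mult_nat)
  also have "\<dots> = (of_nat n powr z) ^ Suc k" by (simp only: Suc.IH power_Suc)
  finally show ?case .
qed

lemma cpowr_lin:
  assumes "n > 0"
  shows "(of_nat n :: complex) powr (of_nat a - of_nat b * s) = of_nat n ^ a * (of_nat n powr (- s)) ^ b"
proof -
  have nz: "(of_nat n :: complex) \<noteq> 0" using assms by simp
  have "(of_nat n :: complex) powr (of_nat a - of_nat b * s) = exp (of_nat a * Ln (of_nat n) - of_nat b * (s * Ln (of_nat n)))"
    using nz by (simp add: powr_def algebra_simps)
  also have "\<dots> = exp (of_nat a * Ln (of_nat n) + of_nat b * (- s * Ln (of_nat n)))"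
    by (simp add: algebra_simps)
  also have "\<dots> = exp (Ln (of_nat n)) ^ a * exp (- s * Ln (of_nat n)) ^ b"
    by (simp only: exp_add exp_of_nat_mult)
  also have "\<dots> = of_nat n ^ a * (of_nat n powr (- s)) ^ b"
    using nz by (simp add: powr_def exp_Ln del: Ln_of_nat)
  finally show ?thesis .
qed

lemma norm_cpowr_nat: "norm ((of_nat n :: complex) powr z) = real n powr Re z"
  by (subst norm_powr_real_powr) auto

lemma zeta_has_sum:
  assumes "Re x > 1"
  shows "((\<lambda>n. (of_nat n :: complex) powr (- x)) has_sum rzeta x) {0<..}"
proof -
  have "summable (\<lambda>n. real n powr (- Re x))"
    using assms by (subst summable_real_powr_iff) auto
  hence s1: "summable (\<lambda>n. real (Suc n) powr (- Re x))"
    by (subst summable_Suc_iff)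
  hence s2: "summable (\<lambda>n. norm ((of_nat (Suc n) :: complex) powr (- x)))"
    by (simp only: norm_cpowr_nat uminus_complex.sel)
  hence "(\<lambda>n. (of_nat (Suc n) :: complex) powr (- x)) sums rzeta x"
    unfolding rzeta_def by (rule summable_sums[OF summable_norm_cancel])
  hence "((\<lambda>n. (of_nat (Suc n) :: complex) powr (- x)) has_sum rzeta x) UNIV"
    using s2 by (intro norm_summable_imp_has_sum) auto
  hence "(((\<lambda>n. (of_nat n :: complex) powr (- x)) \<circ> Suc) has_sum rzeta x) UNIV" by (simp add: o_def)
  hence "((\<lambda>n. (of_nat n :: complex) powr (- x)) has_sum rzeta x) (range Suc)"
    by (subst has_sum_reindex) auto
  moreover have "range Suc = {0<..}" using not0_implies_Suc by (auto simp: image_iff)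
  ultimately show ?thesis by simp
qed

lemma split1:
  fixes f :: "nat \<Rightarrow> 'a :: banach"
  assumes "(f has_sum a) {0<..}"
  shows "(f has_sum (a - f 1)) {2..}"
proof -
  have "f summable_on {2..}"
    using assms by (rule summable_on_subset_banach[OF has_sum_imp_summable]) auto
  then obtain b where b: "(f has_sum b) {2..}" unfolding summable_on_def by blast
  have "(f has_sum (f 1 + b)) ({1} \<union> {2..})"
    by (rule has_sum_Un_disjoint[OF _ b]) (use has_sum_finite[of "{1}" f] in auto)
  moreover have "{1} \<union> {2..} = {0::nat<..}" by auto
  ultimately have "a = f 1 + b" using assms has_sum_unique by metis
  with b show ?thesis by (simp add: algebra_simps)
qed

lemma basel_sum: "((\<lambda>n. real n powr (-2)) has_sum (pi^2/6 - 1)) {2..}"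
proof -
  have "((\<lambda>n. 1 / real ((n + 1)^2)) has_sum pi^2/6) UNIV"
    by (rule sums_nonneg_imp_has_sum[OF inverse_squares_sums]) auto
  hence "(((\<lambda>n. real n powr (-2)) \<circ> Suc) has_sum pi^2/6) UNIV"
    by (rule has_sum_cong[THEN iffD1, rotated]) (simp add: powr_minus powr_realpow field_simps)
  hence "((\<lambda>n. real n powr (-2)) has_sum pi^2/6) (range Suc)"
    by (subst has_sum_reindex) auto
  moreover have "range Suc = {0::nat<..}" using not0_implies_Suc by (auto simp: image_iff)
  ultimately have "((\<lambda>n. real n powr (-2)) has_sum pi^2/6) {0<..}" by simp
  from split1[OF this] show ?thesis by simp
qed

lemma zeta_nonzero:
  assumes "Re x \<ge> 2"
  shows "rzeta x \<noteq> 0"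
proof -
  have z: "((\<lambda>n. (of_nat n :: complex) powr (- x)) has_sum rzeta x) {0<..}"
    using assms by (intro zeta_has_sum) auto
  from split1[OF z] have r: "((\<lambda>n. (of_nat n :: complex) powr (- x)) has_sum (rzeta x - 1)) {2..}" by simp
  have "norm (rzeta x - 1) \<le> pi^2/6 - 1"
  proof (rule norm_infsum_le[OF r basel_sum])
    fix n :: nat assume "n \<in> {2..}"
    hence "real n \<ge> 1" by simp
    thus "norm ((of_nat n :: complex) powr (- x)) \<le> real n powr (-2)"
      unfolding norm_cpowr_nat using assms by (intro powr_mono) auto
  qed
  moreover have "pi^2/6 - 1 < 1" 
  proof -
    have "pi * pi \<le> 3.2 * 3.2" using pi_approx(2) pi_gt_zero by (intro mult_mono) auto
    thus ?thesis by (simp add: power2_eq_square)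
  qed
  ultimately show ?thesis by auto
qed




lemma has_sum_product:
  fixes f :: "'a \<Rightarrow> complex" and g :: "'b \<Rightarrow> complex"
  assumes fa: "(f has_sum a) A" and gb: "(g has_sum b) B"
  shows "((\<lambda>(x,y). f x * g y) has_sum (a * b)) (A \<times> B)"
proof -
  have nf: "(\<lambda>x. norm (f x)) summable_on A"
    using has_sum_imp_summable[OF fa] summable_on_iff_abs_summable_on_complex by blast
  have "(\<lambda>x. norm (g x)) summable_on B"
    using has_sum_imp_summable[OF gb] summable_on_iff_abs_summable_on_complex by blast
  then obtain NB where NB: "((\<lambda>y. norm (g y)) has_sum NB) B" unfolding summable_on_def by blast
  have "(\<lambda>z. norm ((\<lambda>(x,y). f x * g y) z)) summable_on Sigma A (\<lambda>_. B)"
  proof (rule summable_on_SigmaI[where g = "\<lambda>x. norm (f x) * NB"])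
    fix x assume "x \<in> A"
    show "((\<lambda>y. norm ((\<lambda>(x,y). f x * g y) (x, y))) has_sum norm (f x) * NB) B"
      using has_sum_cmult_right[OF NB, of "norm (f x)"] by (simp add: norm_mult)
  next
    show "(\<lambda>x. norm (f x) * NB) summable_on A" using nf by (rule summable_on_cmult_left)
  qed auto
  hence sm: "(\<lambda>(x,y). f x * g y) summable_on Sigma A (\<lambda>_. B)"
    using summable_on_iff_abs_summable_on_complex by blast
  have "((\<lambda>(x,y). f x * g y) has_sum (a * b)) (Sigma A (\<lambda>_. B))"
  proof (rule has_sum_SigmaI[OF _ _ sm])
    fix x assume "x \<in> A"
    show "((\<lambda>y. (\<lambda>(x,y). f x * g y) (x, y)) has_sum f x * b) B"
      using has_sum_cmult_right[OF gb, of "f x"] by simp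
  next
    show "((\<lambda>x. f x * b) has_sum a * b) A" by (rule has_sum_cmult_left[OF fa])
  qed
  thus ?thesis by simp
qed

definition Fs :: "complex \<Rightarrow> (nat \<times> nat \<times> nat) \<times> nat \<Rightarrow> complex" where
  "Fs s y = of_nat (idx y) powr (- s)"

definition Gs :: "complex \<Rightarrow> nat \<times> nat \<times> nat \<Rightarrow> complex" where
  "Gs s = (\<lambda>(u,v,w). of_nat (w * v^2) * of_nat (u * w^2 * v^3) powr (- s))"

lemma sigma_sum:
  assumes "(Gs s has_sum T) A"
  shows "(Fs s has_sum T) (Sigma A Bf)"
proof -
  have fib: "((\<lambda>b. Fs s (x, b)) has_sum Gs s x) (Bf x)" for x
  proof -
    obtain u v w where x: "x = (u,v,w)" by (metis prod.exhaust)
    have "((\<lambda>b. Fs s (x, b)) has_sum (\<Sum>b\<in>Bf x. Fs s (x, b))) (Bf x)"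
      by (rule has_sum_finite) (simp add: x Bf_def)
    moreover have "(\<Sum>b\<in>Bf x. Fs s (x, b)) = Gs s x"
      by (simp add: x Bf_def Fs_def Gs_def idx_def)
    ultimately show ?thesis by simp
  qed
  have "(\<lambda>y. norm (Fs s y)) summable_on Sigma A Bf"
  proof (rule summable_on_SigmaI[where g = "\<lambda>x. norm (Gs s x)"])
    fix x assume "x \<in> A"
    obtain u v w where x: "x = (u,v,w)" by (metis prod.exhaust)
    have "((\<lambda>b. norm (Fs s (x, b))) has_sum (\<Sum>b\<in>Bf x. norm (Fs s (x, b)))) (Bf x)"
      by (rule has_sum_finite) (simp add: x Bf_def)
    moreover have "(\<Sum>b\<in>Bf x. norm (Fs s (x, b))) = norm (Gs s x)"
      by (simp add: x Bf_def Fs_def Gs_def idx_def norm_mult norm_power)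
    ultimately show "((\<lambda>b. norm (Fs s (x, b))) has_sum norm (Gs s x)) (Bf x)" by simp
  next
    show "(\<lambda>x. norm (Gs s x)) summable_on A"
      using has_sum_imp_summable[OF assms] summable_on_iff_abs_summable_on_complex by blast
  qed auto
  hence "Fs s summable_on Sigma A Bf" using summable_on_iff_abs_summable_on_complex by blast
  thus ?thesis by (intro has_sum_SigmaI[OF fib assms])
qed

lemma to_subrings:
  assumes "(Fs s has_sum T) P" "P \<subseteq> Sigma A0 Bf"
  shows "((\<lambda>S. of_nat (rindex S) powr (- s)) has_sum T) (Phi ` P)"
proof -
  have inj: "inj_on Phi P" using inj_on_subset[OF Phi_inj assms(2)] .
  have "(((\<lambda>S. of_nat (rindex S) powr (- s)) \<circ> Phi) has_sum T) P"
    using assms(1) by (rule has_sum_cong[THEN iffD1, rotated])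
       (use assms(2) Phi_props(2) in \<open>auto simp: Fs_def\<close>)
  thus ?thesis using has_sum_reindex[OF inj] by blast
qed




lemma cpowr_mult_nat': "(of_nat m * of_nat n :: complex) powr z = of_nat m powr z * of_nat n powr z"
  using cpowr_mult_nat[of m n z] by simp

lemma cpowr_pow_nat': "(of_nat n ^ k :: complex) powr z = (of_nat n powr z) ^ k"
  using cpowr_pow_nat[of n k z] by simp

lemma Gs_eq:
  "Gs s (u,v,w) = of_nat u powr (-s) * ((of_nat v ^ 2 * (of_nat v powr (-s))^3) * (of_nat w * (of_nat w powr (-s))^2))"
proof -
  have e: "(of_nat (u * w^2 * v^3)::complex) powr (-s) = of_nat u powr (-s) * (of_nat w powr (-s))^2 * (of_nat v powr (-s))^3"
    by (simp only: cpowr_mult_nat cpowr_pow_nat)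
  show ?thesis unfolding Gs_def prod.case e by (simp add: mult_ac)
qed

lemma zeta_lin:
  assumes "Re (of_nat b * s - of_nat a) > 1"
  shows "((\<lambda>n. of_nat n ^ a * ((of_nat n :: complex) powr (-s))^b) has_sum rzeta (of_nat b * s - of_nat a)) {0<..}"
proof -
  have "((\<lambda>n. (of_nat n :: complex) powr (- (of_nat b * s - of_nat a))) has_sum rzeta (of_nat b * s - of_nat a)) {0<..}"
    using assms by (rule zeta_has_sum)
  thus ?thesis
  proof (rule has_sum_cong[THEN iffD1, rotated])
    fix n :: nat assume "n \<in> {0<..}"
    hence "(of_nat n :: complex) powr (of_nat a - of_nat b * s) = of_nat n ^ a * (of_nat n powr (- s)) ^ b"
      by (intro cpowr_lin) auto
    thus "(of_nat n :: complex) powr (- (of_nat b * s - of_nat a)) = of_nat n ^ a * (of_nat n powr (- s)) ^ b"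
      by (simp add: algebra_simps)
  qed
qed

lemma sqf_bij: "bij_betw (\<lambda>(w,t). w * t^2) ({w::nat. squarefree w} \<times> {0::nat<..}) {0::nat<..}"
proof (rule bij_betwI')
  fix x y assume "x \<in> {w::nat. squarefree w} \<times> {0::nat<..}" "y \<in> {w::nat. squarefree w} \<times> {0::nat<..}"
  moreover obtain a b where x: "x = (a,b)" by (cases x)
  moreover obtain c d where y: "y = (c,d)" by (cases y)
  ultimately have h: "squarefree a" "squarefree c" "b > 0" "d > 0" by auto
  show "((\<lambda>(w,t). w * t^2) x = (\<lambda>(w,t). w * t^2) y) = (x = y)"
  proof
    assume "(\<lambda>(w,t). w * t^2) x = (\<lambda>(w,t). w * t^2) y"
    hence "a * b^2 = c * d^2" unfolding x y by simp
    from sqf_decomp_unique[OF h this] show "x = y" unfolding x y by simp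
  qed simp
next
  fix x assume "x \<in> {w::nat. squarefree w} \<times> {0::nat<..}"
  then show "(\<lambda>(w,t). w * t^2) x \<in> {0<..}" using sqf_pos by (cases x) auto
next
  fix n :: nat assume "n \<in> {0<..}"
  then obtain w v where "squarefree w" "v > 0" "n = w * v^2" using sqf_decomp_exists[of n] by blast
  then show "\<exists>x\<in>{w::nat. squarefree w} \<times> {0::nat<..}. n = (\<lambda>(w,t). w * t^2) x"
    by (intro bexI[of _ "(w,v)"]) auto
qed

theorem part2:
  fixes s :: complex
  assumes s: "Re s > 1"
  shows "((\<lambda>S. of_nat (rindex S) powr (- s)) has_sum
             (rzeta s * rzeta (2 * s - 1) * rzeta (3 * s - 2) / rzeta (4 * s - 2))) {S. is_subring S}"
proof -
  define E where "E n = (of_nat n :: complex) powr (-s)" for n :: nat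
  define Sq where "Sq = {w::nat. squarefree w}"
  have z1: "((\<lambda>n. E n) has_sum rzeta s) {0<..}" unfolding E_def using s by (rule zeta_has_sum)
  have z2: "((\<lambda>n. of_nat n ^ 1 * E n ^ 2) has_sum rzeta (2 * s - 1)) {0<..}"
    unfolding E_def using zeta_lin[of 2 s 1] s by simp
  have z3: "((\<lambda>n. of_nat n ^ 2 * E n ^ 3) has_sum rzeta (3 * s - 2)) {0<..}"
    unfolding E_def using zeta_lin[of 3 s 2] s by simp
  have z4: "((\<lambda>n. of_nat n ^ 2 * E n ^ 4) has_sum rzeta (4 * s - 2)) {0<..}"
    unfolding E_def using zeta_lin[of 4 s 2] s by simp
  have "(\<lambda>n. of_nat n ^ 1 * E n ^ 2) summable_on Sq"
  proof (rule summable_on_subset_banach[OF has_sum_imp_summable[OF z2]])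
    show "Sq \<subseteq> {0<..}" using sqf_pos unfolding Sq_def by auto
  qed
  then obtain Q where zQ: "((\<lambda>n. of_nat n ^ 1 * E n ^ 2) has_sum Q) Sq" unfolding summable_on_def by blast
  have "((\<lambda>(w,t). (of_nat w ^ 1 * E w ^ 2) * (of_nat t ^ 2 * E t ^ 4)) has_sum (Q * rzeta (4 * s - 2))) (Sq \<times> {0<..})"
    by (rule has_sum_product[OF zQ z4])
  moreover have "(\<lambda>(w,t). (of_nat w ^ 1 * E w ^ 2) * (of_nat t ^ 2 * E t ^ 4)) = (\<lambda>n. of_nat n ^ 1 * E n ^ 2) \<circ> (\<lambda>(w,t). w * t^2)"
  proof (rule ext, clarify)
    fix w t :: nat
    have e: "E (w * t^2) = E w * E t ^ 2" unfolding E_def by (simp only: cpowr_mult_nat cpowr_pow_nat)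
    have "((E w * E t ^ 2))^2 = E w ^ 2 * E t ^ 4"
      by (simp add: power_mult_distrib flip: power_mult)
    then show "(of_nat w ^ 1 * E w ^ 2) * (of_nat t ^ 2 * E t ^ 4) = ((\<lambda>n. of_nat n ^ 1 * E n ^ 2) \<circ> (\<lambda>(w,t). w * t^2)) (w,t)"
      unfolding o_def prod.case e by (simp add: mult_ac)
  qed
  ultimately have "((\<lambda>n. of_nat n ^ 1 * E n ^ 2) has_sum (Q * rzeta (4 * s - 2))) ((\<lambda>(w,t). w * t^2) ` (Sq \<times> {0<..}))"
    using has_sum_reindex[of "\<lambda>(w,t). w * t^2" "Sq \<times> {0<..}"] sqf_bij unfolding Sq_def bij_betw_def by auto
  hence "((\<lambda>n. of_nat n ^ 1 * E n ^ 2) has_sum (Q * rzeta (4 * s - 2))) {0<..}"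
    using sqf_bij unfolding Sq_def bij_betw_def by simp
  hence Qid: "rzeta (2 * s - 1) = Q * rzeta (4 * s - 2)" using z2 has_sum_unique by blast
  have nz: "rzeta (4 * s - 2) \<noteq> 0" using s by (intro zeta_nonzero) simp
  have inner: "((\<lambda>(v,w). (of_nat v ^ 2 * E v ^ 3) * (of_nat w ^ 1 * E w ^ 2)) has_sum (rzeta (3 * s - 2) * Q)) ({0<..} \<times> Sq)"
    by (rule has_sum_product[OF z3 zQ])
  have outer: "((\<lambda>(u,vw). E u * (\<lambda>(v,w). (of_nat v ^ 2 * E v ^ 3) * (of_nat w ^ 1 * E w ^ 2)) vw) has_sum (rzeta s * (rzeta (3 * s - 2) * Q))) ({0<..} \<times> ({0<..} \<times> Sq))"
    by (rule has_sum_product[OF z1 inner])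
  have A0eq: "A0 = {0<..} \<times> ({0<..} \<times> Sq)" unfolding A0_def Sq_def by auto
  have "(Gs s has_sum (rzeta s * (rzeta (3 * s - 2) * Q))) A0"
    unfolding A0eq using outer
    by (rule has_sum_cong[THEN iffD1, rotated]) (clarsimp simp: Gs_eq E_def)
  hence "(Fs s has_sum (rzeta s * (rzeta (3 * s - 2) * Q))) (Sigma A0 Bf)" by (rule sigma_sum)
  from to_subrings[OF this] have "((\<lambda>S. of_nat (rindex S) powr (- s)) has_sum (rzeta s * (rzeta (3 * s - 2) * Q))) {S. is_subring S}"
    by (simp add: Phi_image)
  moreover have "rzeta s * (rzeta (3 * s - 2) * Q) = rzeta s * rzeta (2 * s - 1) * rzeta (3 * s - 2) / rzeta (4 * s - 2)"
    unfolding Qid using nz by (simp add: field_simps)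
  ultimately show ?thesis by simp
qed




lemma geom_has_sum:
  fixes z :: complex
  assumes "norm z < 1"
  shows "((\<lambda>n. z ^ n) has_sum (1 / (1 - z))) UNIV"
proof (rule norm_summable_imp_has_sum)
  show "summable (\<lambda>n. norm (z ^ n))" using assms by (simp add: norm_power summable_geometric)
  show "(\<lambda>n. z ^ n) sums (1 / (1 - z))" using geometric_sums[OF assms] by simp
qed

lemma Sigma_p:
  fixes p :: nat
  assumes p: "prime p"
  defines "m \<equiv> (\<lambda>(i::nat,j::nat,w::nat). (p^i, p^j, w))"
  shows "Sigma (m ` (UNIV \<times> (UNIV \<times> {1,p}))) Bf = {y \<in> Sigma A0 Bf. \<exists>k. idx y = p^k}"
proof (intro set_eqI iffI)
  have p1: "p > 1" using p prime_gt_1_nat by blast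
  have sq: "squarefree p" using p by (rule squarefree_prime)
  fix y assume "y \<in> Sigma (m ` (UNIV \<times> (UNIV \<times> {1,p}))) Bf"
  then obtain i j w \<beta> where y: "y = ((p^i, p^j, w), \<beta>)" "w \<in> {1,p}" "\<beta> \<in> Bf (p^i, p^j, w)"
    unfolding m_def by auto
  have "y \<in> Sigma A0 Bf" using y p1 sq unfolding A0_def by auto
  moreover have "idx y = p^(i + 3*j)" if "w = 1" using that y unfolding idx_def
    by (simp add: power_add power_mult mult_ac flip: power_mult)
  moreover have "idx y = p^(i + 2 + 3*j)" if "w = p" using that y unfolding idx_def
    by (simp add: power_add mult_ac power2_eq_square flip: power_mult)
  ultimately show "y \<in> {y \<in> Sigma A0 Bf. \<exists>k. idx y = p^k}" using y(2) by blast
next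
  have p1: "p > 1" using p prime_gt_1_nat by blast
  fix y assume "y \<in> {y \<in> Sigma A0 Bf. \<exists>k. idx y = p^k}"
  then obtain u v w \<beta> k where y: "y = ((u,v,w),\<beta>)" "(u,v,w) \<in> A0" "\<beta> \<in> Bf (u,v,w)" "u * w^2 * v^3 = p^k"
    unfolding idx_def by auto
  have "u dvd p^k" using y(4) by (metis dvd_mult2 dvd_refl mult.assoc)
  then obtain i where i: "u = p^i" using divides_primepow_nat[OF p] by blast
  have "v dvd p^k" using y(4) by (metis dvd_mult dvd_refl power3_eq_cube mult.assoc)
  then obtain j where j: "v = p^j" using divides_primepow_nat[OF p] by blast
  have "w dvd p^k" using y(4) by (metis dvd_mult dvd_mult2 dvd_refl power2_eq_square)
  then obtain e where e: "w = p^e" using divides_primepow_nat[OF p] by blast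
  have sw: "squarefree w" using y(2) unfolding A0_def by auto
  have "e \<le> 1"
  proof (rule ccontr)
    assume "\<not> e \<le> 1"
    then have "p^2 dvd w" unfolding e by (intro le_imp_power_dvd) auto
    hence "p dvd 1" using squarefreeD[OF sw] by blast
    thus False using p1 by simp
  qed
  hence "w \<in> {1,p}" unfolding e using le_Suc_eq by auto
  hence "(u,v,w) \<in> m ` (UNIV \<times> (UNIV \<times> {1,p}))" unfolding m_def i j by force
  thus "y \<in> Sigma (m ` (UNIV \<times> (UNIV \<times> {1,p}))) Bf" using y by auto
qed

theorem part1:
  fixes s :: complex
  assumes s: "Re s > 1" and p: "prime p"
  shows "((\<lambda>S. of_nat (rindex S) powr (- s)) has_sum
               (let Z = of_nat p powr (- s)
                in (1 + of_nat p * Z ^ 2) / ((1 - Z) * (1 - of_nat p ^ 2 * Z ^ 3))))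
            {S. is_subring S \<and> (\<exists>k. rindex S = p ^ k)}"
proof -
  define Z where "Z = (of_nat p :: complex) powr (- s)"
  define E where "E n = (of_nat n :: complex) powr (-s)" for n :: nat
  define m where "m = (\<lambda>(i::nat,j::nat,w::nat). (p^i, p^j, w))"
  define D where "D = (UNIV :: nat set) \<times> ((UNIV :: nat set) \<times> {1,p})"
  have p1: "p > 1" using p prime_gt_1_nat by blast
  have rp: "real p > 1" using p1 by simp
  have nZ: "norm Z = real p powr (- Re s)" unfolding Z_def by (simp add: norm_cpowr_nat)
  have nZ1: "norm Z < 1" unfolding nZ using rp s by (intro powr_less_one) auto
  have A: "norm (of_nat p ^ 2 * Z ^ 3) = real p ^ 2 * (real p powr (- Re s))^3"
    unfolding norm_mult norm_power nZ by simp
  have B: "(real p powr (- Re s))^3 = real p powr (- (3 * Re s))"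
    using powr_power[of "real p" "- Re s" 3] p1 by simp
  have C: "real p powr (2 - 3 * Re s) = real p ^ 2 * real p powr (- (3 * Re s))"
    using powr_add[of "real p" 2 "- (3 * Re s)"] p1 by simp
  have "norm (of_nat p ^ 2 * Z ^ 3) = real p powr (2 - 3 * Re s)" using A B C by simp
  hence nW1: "norm (of_nat p ^ 2 * Z ^ 3) < 1" using rp s by (simp add: powr_less_one)
  have g1: "((\<lambda>i. Z ^ i) has_sum (1 / (1 - Z))) UNIV" by (rule geom_has_sum[OF nZ1])
  have g2: "((\<lambda>j. (of_nat p ^ 2 * Z ^ 3) ^ j) has_sum (1 / (1 - of_nat p ^ 2 * Z ^ 3))) UNIV"
    by (rule geom_has_sum[OF nW1])
  have g3: "((\<lambda>w. of_nat w ^ 1 * E w ^ 2) has_sum (1 + of_nat p * Z^2)) {1,p}"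
  proof -
    have eq: "(\<Sum>w\<in>{1,p}. of_nat w ^ 1 * E w ^ 2) = 1 + of_nat p * Z^2"
      using p1 by (simp add: E_def Z_def)
    show ?thesis by (subst eq[symmetric]) (rule has_sum_finite, simp)
  qed
  have inner: "((\<lambda>(j,w). (of_nat p ^ 2 * Z ^ 3) ^ j * (of_nat w ^ 1 * E w ^ 2)) has_sum
       (1 / (1 - of_nat p ^ 2 * Z ^ 3) * (1 + of_nat p * Z^2))) (UNIV \<times> {1,p})"
    by (rule has_sum_product[OF g2 g3])
  have outer: "((\<lambda>(i,jw). Z ^ i * (\<lambda>(j,w). (of_nat p ^ 2 * Z ^ 3) ^ j * (of_nat w ^ 1 * E w ^ 2)) jw) has_sum
       (1 / (1 - Z) * (1 / (1 - of_nat p ^ 2 * Z ^ 3) * (1 + of_nat p * Z^2)))) D"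
    unfolding D_def by (rule has_sum_product[OF g1 inner])
  define T where "T = 1 / (1 - Z) * (1 / (1 - of_nat p ^ 2 * Z ^ 3) * (1 + of_nat p * Z^2))"
  have "((Gs s \<circ> m) has_sum T) D"
    unfolding T_def using outer
  proof (rule has_sum_cong[THEN iffD1, rotated])
    fix x assume "x \<in> D"
    obtain i j w where x: "x = (i,j,w)" by (metis prod.exhaust)
    have e1: "E (p^i) = Z^i" unfolding E_def Z_def by (rule cpowr_pow_nat)
    have e2: "E (p^j) = Z^j" unfolding E_def Z_def by (rule cpowr_pow_nat)
    have "of_nat (p^j) ^ 2 * E (p^j) ^ 3 = (of_nat p ^ 2 * Z ^ 3) ^ j"
      unfolding e2 by (simp add: power_mult_distrib flip: power_mult) (simp add: mult.commute)
    then show "(\<lambda>(i,jw). Z ^ i * (\<lambda>(j,w). (of_nat p ^ 2 * Z ^ 3) ^ j * (of_nat w ^ 1 * E w ^ 2)) jw) x = (Gs s \<circ> m) x"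
      unfolding x m_def o_def prod.case Gs_eq E_def[symmetric] e1 by simp
  qed
  moreover have inj: "inj_on m D"
    unfolding m_def D_def inj_on_def using p1 by (auto simp: power_inject_exp)
  ultimately have "(Gs s has_sum T) (m ` D)" using has_sum_reindex by blast
  hence "(Fs s has_sum T) (Sigma (m ` D) Bf)" by (rule sigma_sum)
  moreover have SP: "Sigma (m ` D) Bf = {y \<in> Sigma A0 Bf. \<exists>k. idx y = p^k}"
    unfolding m_def D_def by (rule Sigma_p[OF p])
  ultimately have "((\<lambda>S. of_nat (rindex S) powr (- s)) has_sum T) (Phi ` Sigma (m ` D) Bf)"
    by (intro to_subrings) auto
  moreover have "Phi ` Sigma (m ` D) Bf = {S. is_subring S \<and> (\<exists>k. rindex S = p ^ k)}"
  proof (intro set_eqI iffI)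
    fix S assume "S \<in> Phi ` Sigma (m ` D) Bf"
    then obtain y where "y \<in> {y \<in> Sigma A0 Bf. \<exists>k. idx y = p^k}" "S = Phi y" unfolding SP by blast
    hence "y \<in> Sigma A0 Bf" "\<exists>k. idx y = p^k" "S = Phi y" by auto
    thus "S \<in> {S. is_subring S \<and> (\<exists>k. rindex S = p ^ k)}" using Phi_props by auto
  next
    fix S assume S: "S \<in> {S. is_subring S \<and> (\<exists>k. rindex S = p ^ k)}"
    then obtain y where y: "y \<in> Sigma A0 Bf" "S = Phi y" using Phi_image by blast
    hence "\<exists>k. idx y = p^k" using S Phi_props(2)[OF y(1)] by auto
    thus "S \<in> Phi ` Sigma (m ` D) Bf" unfolding SP using y by auto
  qed
  moreover have "T = (let Z = of_nat p powr (- s)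
                in (1 + of_nat p * Z ^ 2) / ((1 - Z) * (1 - of_nat p ^ 2 * Z ^ 3)))"
  proof -
    have "1 - Z \<noteq> 0" using nZ1 by auto
    moreover have "1 - of_nat p ^ 2 * Z ^ 3 \<noteq> 0" using nW1 by (metis norm_one order_less_irrefl right_minus_eq)
    ultimately show ?thesis unfolding T_def Let_def Z_def[symmetric] by (simp add: field_simps)
  qed
  ultimately show ?thesis by simp
qed


theorem corollary5:
  fixes s :: complex
  assumes "Re s > 1"
  shows "(\<forall>p::nat. prime p \<longrightarrow>
            ((\<lambda>S. of_nat (rindex S) powr (- s)) has_sum
               (let Z = of_nat p powr (- s)
                in (1 + of_nat p * Z ^ 2) / ((1 - Z) * (1 - of_nat p ^ 2 * Z ^ 3))))
            {S. is_subring S \<and> (\<exists>k. rindex S = p ^ k)})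
       \<and> ((\<lambda>S. of_nat (rindex S) powr (- s)) has_sum
             (rzeta s * rzeta (2 * s - 1) * rzeta (3 * s - 2) / rzeta (4 * s - 2)))
           {S. is_subring S}"
  using part1[OF assms] part2[OF assms] by blast

end
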